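(* Let $S\subseteq[0,1]$ be the Smith–Volterra–Cantor set $\mathrm{SVC}(4)$ and let $f\colon[0,1]\to\mathbb{R}$ be the function defined from it as in the context. Then $f$ is not differentiable at any point of $S$.
   Context: Construction of $S$: let $S_0=[0,1]$. If $S_{n-1}=\bigcup_k[a_k,b_k]$ (finite disjoint union of closed "component intervals") for $n\geqslant1$, put $S_n=\bigcup_k\left(\left[a_k,\frac{a_k+b_k}{2}-\frac{1}{2^{2n+1}}\right]\cup\left[\frac{a_k+b_k}{2}+\frac{1}{2^{2n+1}},b_k\right]\right)$, i.e. an open interval of length $1/4^n$ centred at the midpoint is removed from each component interval. Let $S=\bigcap_{n\in\mathbb{N}}S_n$. The set $[0,1]\setminus S$ is a countable disjoint union of open intervals (the contiguous intervals of $S$); let $\{(a_n,b_n)\}_{n\in\mathbb{N}}$ be an enumeration of them and $c_n=(a_n+b_n)/2$. Define $f\colon[0,1]\to\mathbb{R}$ by $f=0$ on $S$, and on $(a_n,b_n)$: $f(x)=(x-a_n)^{1/4}\sin\big((x-a_n)^{-7/4}\big)$ for $a_n<x\leqslant c_n$, and $f(x)=(b_n-x)^{1/4}\sin\big((b_n-x)^{-7/4}\big)$ for $c_n\leqslant x<b_n$. (At the points $0,1$ differentiability is understood one-sidedly.) *)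

theory Defs
  imports "HOL-Analysis.Analysis"
begin

text \<open>Component intervals of S_n, as a list of pairs (a,b) standing for [a,b].
  Step n (n \<ge> 1) removes from each [a,b] the open interval of length 1/4^n
  centred at the midpoint.\<close>

definition svc_split :: "nat \<Rightarrow> real \<times> real \<Rightarrow> (real \<times> real) list" where
  "svc_split n ab = (case ab of (a, b) \<Rightarrow>
      [(a, (a + b) / 2 - 1 / 2 ^ (2 * n + 1)), ((a + b) / 2 + 1 / 2 ^ (2 * n + 1), b)])"

fun svc_intervals :: "nat \<Rightarrow> (real \<times> real) list" where
  "svc_intervals 0 = [(0, 1)]"
| "svc_intervals (Suc n) = concat (map (svc_split (Suc n)) (svc_intervals n))"

definition svc_level :: "nat \<Rightarrow> real set" where
  "svc_level n = (\<Union>(a, b) \<in> set (svc_intervals n). {a..b})"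

definition SVC :: "real set" where
  "SVC = (\<Inter>n. svc_level n)"

definition svc_f :: "real \<Rightarrow> real" where
  "svc_f x = (if x \<in> SVC then 0 else
     (let C = connected_component_set ({0..1} - SVC) x;
          a = Inf C; b = Sup C in
      if x \<le> (a + b) / 2
      then (x - a) powr (1/4) * sin ((x - a) powr (-7/4))
      else (b - x) powr (1/4) * sin ((b - x) powr (-7/4))))"

end

theory Submission
  imports Defs
begin

definition ell :: "nat \<Rightarrow> real" where "ell n = (1/2^n + 1/4^n)/2"

lemma split_mem: "(c,d) \<in> set (svc_split k (p,q)) \<longleftrightarrow>
   (c = p \<and> d = (p+q)/2 - 1/2^(2*k+1)) \<or> (c = (p+q)/2 + 1/2^(2*k+1) \<and> d = q)"
  by (auto simp: svc_split_def)

lemma L_Suc_mem: "(c,d) \<in> set (svc_intervals (Suc n)) \<longleftrightarrow>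
   (\<exists>p q. (p,q) \<in> set (svc_intervals n) \<and> (c,d) \<in> set (svc_split (Suc n) (p,q)))"
  by auto

lemma ell_Suc: "ell (Suc n) = ell n / 2 - 1/2^(2*Suc n+1)"
proof -
  have a: "(2::real)^(2*Suc n+1) = 8*4^n" by (simp add: power_add power_mult)
  have b: "(4::real)^n = 2^n * 2^n" by (metis power_mult_distrib mult_2_right power2_eq_square numeral_Bit0 power_mult_distrib)
  show ?thesis unfolding ell_def a using b by (simp add: field_simps)
qed

lemma ell_pos: "ell n > 0" unfolding ell_def by (simp add: add_pos_pos)

lemma ell_le: "ell n \<le> 1/2^n"
proof -
  have "(2::real)^n \<le> 4^n" by (rule power_mono) auto
  then have "1/4^n \<le> (1::real)/2^n" by (simp add: frac_le)
  then show ?thesis unfolding ell_def by simp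
qed

lemma piece_sub:
  assumes "(c,d) \<in> set (svc_split (Suc n) (p,q))" "q - p = ell n"
  shows "p \<le> c \<and> d \<le> q \<and> d - c = ell (Suc n)"
proof -
  define e where "e = (1::real)/2^(2*Suc n+1)"
  have e0: "e > 0" unfolding e_def by simp
  have E: "ell (Suc n) = ell n / 2 - e" unfolding e_def by (rule ell_Suc)
  have "(c = p \<and> d = (p+q)/2 - e) \<or> (c = (p+q)/2 + e \<and> d = q)"
    using assms(1) unfolding split_mem e_def .
  moreover have "q - p = ell n" "ell (Suc n) = ell n / 2 - e" "0 < e" "0 < ell (Suc n)"
    using assms(2) E e0 ell_pos[of "Suc n"] by auto
  ultimately show ?thesis by (auto simp: field_simps)
qed

lemma len: "(a,b) \<in> set (svc_intervals n) \<Longrightarrow> b - a = ell n"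
proof (induction n arbitrary: a b)
  case 0 then show ?case by (simp add: ell_def)
next
  case (Suc n)
  then obtain p q where "(p,q) \<in> set (svc_intervals n)" "(a,b) \<in> set (svc_split (Suc n) (p,q))"
    using L_Suc_mem by blast
  then show ?case using Suc.IH piece_sub by blast
qed

definition R :: "real \<times> real \<Rightarrow> real \<times> real \<Rightarrow> bool" where "R I J \<longleftrightarrow> snd I < fst J"

lemma sorted_concat:
  "sorted_wrt R xs \<Longrightarrow> (\<forall>(p,q)\<in>set xs. q - p = ell n) \<Longrightarrow>
   sorted_wrt R (concat (map (svc_split (Suc n)) xs))"
proof (induction xs)
  case Nil then show ?case by simp
next
  case (Cons x xs)
  obtain p q where x: "x = (p,q)" by fastforce
  have pq: "q - p = ell n" using Cons.prems x by auto
  have s1: "sorted_wrt R (svc_split (Suc n) (p,q))"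
    using ell_pos[of "Suc n"] pq unfolding svc_split_def R_def ell_Suc by auto
  have s2: "sorted_wrt R (concat (map (svc_split (Suc n)) xs))" using Cons by auto
  have s3: "R A B" if A: "A \<in> set (svc_split (Suc n) (p,q))" and B: "B \<in> set (concat (map (svc_split (Suc n)) xs))" for A B
  proof -
    obtain c d where Ad: "A = (c,d)" by fastforce
    obtain c' d' where Bd: "B = (c',d')" by fastforce
    from B obtain J where J: "J \<in> set xs" "B \<in> set (svc_split (Suc n) J)" by auto
    obtain p' q' where Jd: "J = (p',q')" by fastforce
    have "q < p'" using Cons.prems(1) J(1) x Jd by (auto simp: R_def)
    moreover have "d \<le> q" using piece_sub[of c d n p q] A Ad pq by auto
    moreover have "p' \<le> c'" using piece_sub[of c' d' n p' q'] J Bd Jd Cons.prems(2) by auto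
    ultimately show ?thesis by (simp add: R_def Ad Bd)
  qed
  show ?case using s1 s2 s3 x by (simp add: sorted_wrt_append)
qed

lemma sorted_L: "sorted_wrt R (svc_intervals n)"
proof (induction n)
  case 0 then show ?case by simp
next
  case (Suc n)
  have "\<forall>(p,q)\<in>set (svc_intervals n). q - p = ell n" using len by auto
  then show ?case using sorted_concat Suc by simp
qed

lemma sorted_wrt_two: "sorted_wrt P xs \<Longrightarrow> I \<in> set xs \<Longrightarrow> J \<in> set xs \<Longrightarrow> I \<noteq> J \<Longrightarrow> P I J \<or> P J I"
  by (induction xs) auto

lemma level_mem: "x \<in> svc_level n \<longleftrightarrow> (\<exists>a b. (a,b) \<in> set (svc_intervals n) \<and> a \<le> x \<and> x \<le> b)"
  unfolding svc_level_def by (auto; force)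

lemma level_Suc: "svc_level (Suc n) \<subseteq> svc_level n"
proof
  fix x assume "x \<in> svc_level (Suc n)"
  then obtain c d where cd: "(c,d) \<in> set (svc_intervals (Suc n))" "c \<le> x" "x \<le> d" by (auto simp: level_mem)
  then obtain p q where "(p,q) \<in> set (svc_intervals n)" "(c,d) \<in> set (svc_split (Suc n) (p,q))"
    using L_Suc_mem by blast
  moreover then have "p \<le> c \<and> d \<le> q" using piece_sub len by blast
  ultimately show "x \<in> svc_level n" using cd unfolding level_mem by (meson order_trans)
qed

lemma level_mono: "m \<le> n \<Longrightarrow> svc_level n \<subseteq> svc_level m"
  using lift_Suc_antimono_le[of svc_level] level_Suc by blast

lemma level_0: "svc_level 0 = {0..1}" by (simp add: svc_level_def)

lemma ends: "(a,b) \<in> set (svc_intervals n) \<Longrightarrow>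
   (\<exists>d. (a,d) \<in> set (svc_intervals (n+k))) \<and> (\<exists>c. (c,b) \<in> set (svc_intervals (n+k)))"
proof (induction k)
  case 0 then show ?case by auto
next
  case (Suc k)
  then obtain d c where d: "(a,d) \<in> set (svc_intervals (n+k))" and c: "(c,b) \<in> set (svc_intervals (n+k))" by blast
  have "(a, (a+d)/2 - 1/2^(2*Suc (n+k)+1)) \<in> set (svc_intervals (Suc (n+k)))"
    using d L_Suc_mem split_mem by blast
  moreover have "((c+b)/2 + 1/2^(2*Suc (n+k)+1), b) \<in> set (svc_intervals (Suc (n+k)))"
    using c L_Suc_mem split_mem by blast
  ultimately show ?case by auto
qed

lemma ends_SVC: assumes "(a,b) \<in> set (svc_intervals n)" shows "a \<in> SVC" "b \<in> SVC"
proof -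
  have ab: "a \<le> b" using len[OF assms] ell_pos[of n] by simp
  have "a \<in> svc_level j \<and> b \<in> svc_level j" for j
  proof (cases "n \<le> j")
    case True
    then obtain d c where "(a,d) \<in> set (svc_intervals j)" "(c,b) \<in> set (svc_intervals j)"
      using ends[OF assms, of "j - n"] by auto
    moreover then have "a \<le> d" "c \<le> b" using len ell_pos[of j] by (metis diff_gt_0_iff_gt less_eq_real_def)+
    ultimately show ?thesis by (auto simp: level_mem)
  next
    case False
    have "a \<in> svc_level n" "b \<in> svc_level n" using assms ab by (auto simp: level_mem)
    then show ?thesis using level_mono[of j n] False by auto
  qed
  then show "a \<in> SVC" "b \<in> SVC" by (auto simp: SVC_def)
qed

lemma SVC_sub: "SVC \<subseteq> svc_level n" by (auto simp: SVC_def)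


lemma comp:
  assumes "a < b" "a \<in> SVC" "b \<in> SVC" "{a<..<b} \<subseteq> {0..1} - SVC" "z \<in> {a<..<b}"
  shows "connected_component_set ({0..1} - SVC) z = {a<..<b}"
proof
  show sub: "{a<..<b} \<subseteq> connected_component_set ({0..1} - SVC) z"
    by (rule connected_component_maximal) (use assms in auto)
  show "connected_component_set ({0..1} - SVC) z \<subseteq> {a<..<b}"
  proof
    fix w assume w: "w \<in> connected_component_set ({0..1} - SVC) z"
    have conn: "connected (connected_component_set ({0..1} - SVC) z)" by simp
    have zC: "z \<in> connected_component_set ({0..1} - SVC) z" using sub assms(5) by blast
    have CS: "connected_component_set ({0..1} - SVC) z \<subseteq> {0..1} - SVC"
      by (rule connected_component_subset)
    show "w \<in> {a<..<b}"
    proof (rule ccontr)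
      assume "w \<notin> {a<..<b}"
      then have "w \<le> a \<or> b \<le> w" by auto
      then have "a \<in> connected_component_set ({0..1} - SVC) z \<or> b \<in> connected_component_set ({0..1} - SVC) z"
      proof
        assume "w \<le> a" then show ?thesis using conn zC w assms(5) unfolding connected_iff_interval
          by (metis greaterThanLessThan_iff less_eq_real_def)
      next
        assume "b \<le> w" then show ?thesis using conn zC w assms(5) unfolding connected_iff_interval
          by (metis greaterThanLessThan_iff less_eq_real_def)
      qed
      then show False using CS assms(2,3) by auto
    qed
  qed
qed

lemma f_val:
  assumes "a < b" "a \<in> SVC" "b \<in> SVC" "{a<..<b} \<subseteq> {0..1} - SVC" "z \<in> {a<..<b}" "z \<le> (a+b)/2"
  shows "svc_f z = (z-a) powr (1/4) * sin ((z-a) powr (-7/4))"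
proof -
  have "z \<notin> SVC" using assms(4,5) by auto
  then show ?thesis unfolding svc_f_def Let_def comp[OF assms(1-5)]
    using assms(1,6) by simp
qed

lemma choose_t:
  fixes d :: real
  assumes d0: "0 < d" and d8: "d \<le> 1/8"
  shows "\<exists>t. d/2 \<le> t \<and> t \<le> d \<and> sin (t powr (-7/4)) = 1"
proof -
  define u where "u = d powr (-7/4)"
  have u0: "u > 0" unfolding u_def using d0 by simp
  have "u = (1/d) powr (7/4)" unfolding u_def using d0
    by (simp add: powr_minus_divide powr_divide)
  also have "\<dots> \<ge> (1/d) powr 1" 
    by (rule powr_mono) (use d0 d8 in \<open>auto simp: field_simps\<close>)
  finally have "u \<ge> 1/d" using d0 by simp
  moreover have "1/d \<ge> 8" using d0 d8 by (simp add: field_simps)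
  ultimately have u8: "u \<ge> 8" by linarith
  define k where "k = nat \<lceil>(u - pi/2)/(2*pi)\<rceil>"
  define s where "s = pi/2 + 2*pi*real k"
  have "(u - pi/2)/(2*pi) \<le> real k" unfolding k_def by linarith
  then have su: "u \<le> s" unfolding s_def by (simp add: field_simps)
  have nn: "(u - pi/2)/(2*pi) \<ge> 0" using u8 pi_less_4 by simp
  have "real k = of_int \<lceil>(u - pi/2)/(2*pi)\<rceil>" using nn unfolding k_def by simp
  also have "\<dots> \<le> (u - pi/2)/(2*pi) + 1" by (rule of_int_ceiling_le_add_one)
  finally have "real k \<le> (u - pi/2)/(2*pi) + 1" .
  then have "s \<le> u + 2*pi" unfolding s_def by (simp add: field_simps)
  then have s2u: "s \<le> 2*u" using u8 pi_less_4 by linarith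
  have s0: "s > 0" using su u0 by linarith
  have sins: "sin s = 1" unfolding s_def sin_add
    using cos_2npi[of k] sin_2npi[of k] by (simp add: mult.commute mult.left_commute)
  define t where "t = s powr (-4/7)"
  have "t powr (-7/4) = s" unfolding t_def powr_powr using s0 by simp
  moreover have "t \<le> d"
  proof -
    have "t \<le> u powr (-4/7)" unfolding t_def by (rule powr_mono2') (use su u0 in auto)
    also have "u powr (-4/7) = d" unfolding u_def powr_powr using d0 by simp
    finally show ?thesis .
  qed
  moreover have "d/2 \<le> t"
  proof -
    have "(2*u) powr (-4/7) \<le> t" unfolding t_def by (rule powr_mono2') (use s2u s0 in auto)
    moreover have "(2*u) powr (-4/7) = 2 powr (-4/7) * d"
      using u0 d0 by (simp add: powr_mult u_def powr_powr)
    moreover have "2 powr (-4/7) \<ge> (2::real) powr (-1)" by (rule powr_mono) auto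
    moreover have "(2::real) powr (-1) = 1/2" by (simp add: powr_minus_divide)
    ultimately have "1/2 * d \<le> 2 powr (-4/7) * d" and "(2*u) powr (-4/7) \<le> t" and "(2*u) powr (-4/7) = 2 powr (-4/7) * d"
      using d0 mult_right_mono[of "1/2" "2 powr (-4/7)" d] by auto
    then show ?thesis by simp
  qed
  ultimately show ?thesis using sins by auto
qed


lemma gap:
  assumes "x \<in> SVC"
  shows "\<exists>y. y \<in> {0..1} \<and> y \<noteq> x \<and> \<bar>y - x\<bar> \<le> 1/2^n \<and> \<bar>svc_f y\<bar>^4 \<ge> 1/(16*4^n)"
proof -
  obtain p q where pq: "(p,q) \<in> set (svc_intervals n)" "p \<le> x" "x \<le> q"
    using assms SVC_sub[of n] level_mem by blast
  define e where "e = (1::real)/2^(2*Suc n+1)"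
  have e8: "e = 1/(8*4^n)" unfolding e_def by (simp add: power_add power_mult)
  define a where "a = (p+q)/2 - e"
  define b where "b = (p+q)/2 + e"
  have pa: "(p,a) \<in> set (svc_intervals (Suc n))"
    using pq(1) L_Suc_mem split_mem unfolding a_def e_def by blast
  have bq: "(b,q) \<in> set (svc_intervals (Suc n))"
    using pq(1) L_Suc_mem split_mem unfolding b_def e_def by blast
  have lq: "q - p = ell n" using len pq(1) by blast
  have la: "a - p = ell (Suc n)" using len pa by blast
  have lb: "q - b = ell (Suc n)" using len bq by blast
  have e0: "e > 0" unfolding e_def by simp
  have ab: "a < b" unfolding a_def b_def using e0 by simp
  have pa': "p \<le> a" using la ell_pos[of "Suc n"] by linarith
  have bq': "b \<le> q" using lb ell_pos[of "Suc n"] by linarith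
  have aS: "a \<in> SVC" using ends_SVC(2)[OF pa] .
  have bS: "b \<in> SVC" using ends_SVC(1)[OF bq] .
  have "p \<le> q" using pq by linarith
  then have "p \<in> svc_level n" "q \<in> svc_level n" using pq(1) unfolding level_mem by blast+
  then have "p \<in> svc_level 0" "q \<in> svc_level 0" using level_mono[of 0 n] by auto
  then have p0: "0 \<le> p" and q1: "q \<le> 1" by (auto simp: level_0)
  have out: "{a<..<b} \<subseteq> {0..1} - SVC"
  proof
    fix z assume z: "z \<in> {a<..<b}"
    have zpq: "p \<le> z" "z \<le> q" using z pa' bq' by auto
    have "z \<notin> svc_level (Suc n)"
    proof
      assume "z \<in> svc_level (Suc n)"
      then obtain c d where cd: "(c,d) \<in> set (svc_intervals (Suc n))" "c \<le> z" "z \<le> d"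
        by (auto simp: level_mem)
      then obtain p' q' where J: "(p',q') \<in> set (svc_intervals n)" "(c,d) \<in> set (svc_split (Suc n) (p',q'))"
        using L_Suc_mem by blast
      show False
      proof (cases "(p',q') = (p,q)")
        case True
        then have "(c = p \<and> d = a) \<or> (c = b \<and> d = q)" using J(2) split_mem unfolding a_def b_def e_def by auto
        then show False using cd z by auto
      next
        case False
        then have "R (p,q) (p',q') \<or> R (p',q') (p,q)" using sorted_wrt_two[OF sorted_L pq(1) J(1)] by auto
        moreover have "p' \<le> c \<and> d \<le> q'" using piece_sub J len by blast
        ultimately show False using cd zpq by (auto simp: R_def)
      qed
    qed
    then show "z \<in> {0..1} - SVC" using SVC_sub zpq p0 q1 by auto
  qed
  have e8': "e \<le> 1/8" unfolding e8 by (simp add: field_simps)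
  obtain t where t: "e/2 \<le> t" "t \<le> e" "sin (t powr (-7/4)) = 1" using choose_t[OF e0 e8'] by blast
  define y where "y = a + t"
  have t0: "t > 0" using t(1) e0 by linarith
  have yab: "y \<in> {a<..<b}" unfolding y_def using t0 t(2) unfolding a_def b_def by auto
  have ymid: "y \<le> (a+b)/2" unfolding y_def a_def b_def using t(2) by (simp add: field_simps)
  have fy: "svc_f y = t powr (1/4)" using f_val[OF ab aS bS out yab ymid] t(3) by (simp add: y_def)
  have "\<bar>svc_f y\<bar>^4 = t" unfolding fy using t0 by (simp add: powr_power)
  moreover have "e/2 = 1/(16*4^n)" unfolding e8 by simp
  ultimately have f4: "\<bar>svc_f y\<bar>^4 \<ge> 1/(16*4^n)" using t(1) by linarith
  have y01: "y \<in> {0..1}" and yS: "y \<notin> SVC" using out yab by auto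
  have "y \<noteq> x" using yS assms by auto
  moreover have "\<bar>y - x\<bar> \<le> 1/2^n"
  proof -
    have "p \<le> y" "y \<le> q" using yab pa' bq' by auto
    then have "\<bar>y - x\<bar> \<le> q - p" using pq by auto
    then show ?thesis using lq ell_le[of n] by linarith
  qed
  ultimately show ?thesis using y01 f4 by blast
qed


lemma final_arith:
  fixes X C F :: real
  assumes X: "X > 0" and A: "1/(16*X) \<le> F" and B: "F \<le> C^4/(X*X)"
  shows "X \<le> 16 * C^4"
proof -
  have "1/(16*X) \<le> C^4/(X*X)" using A B by linarith
  then have "X * X \<le> 16 * X * C^4" using X by (simp add: field_simps)
  then show ?thesis using X by (simp add: mult.assoc)
qed

theorem theorem4p4:
  shows "\<forall>x \<in> SVC. \<not> svc_f differentiable (at x within {0..1})"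
proof
  fix x assume x: "x \<in> SVC"
  show "\<not> svc_f differentiable (at x within {0..1})"
  proof
    assume "svc_f differentiable (at x within {0..1})"
    then obtain D where "(svc_f has_real_derivative D) (at x within {0..1})"
      using real_differentiable_def by blast
    then have lim: "((\<lambda>y. (svc_f y - svc_f x)/(y - x)) \<longlongrightarrow> D) (at x within {0..1})"
      using has_field_derivative_iff by blast
    have fx: "svc_f x = 0" using x by (simp add: svc_f_def)
    have "eventually (\<lambda>y. dist ((svc_f y - svc_f x)/(y-x)) D < 1) (at x within {0..1})"
      using tendstoD[OF lim] by simp
    then obtain r where r: "r > 0"
      "\<forall>y\<in>{0..1}. y \<noteq> x \<and> dist y x < r \<longrightarrow> dist ((svc_f y - svc_f x)/(y-x)) D < 1"
      by (auto simp: eventually_at)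
    define C where "C = \<bar>D\<bar> + 1"
    have bound: "\<bar>svc_f y\<bar> \<le> C * \<bar>y - x\<bar>" if "y \<in> {0..1}" "y \<noteq> x" "\<bar>y - x\<bar> < r" for y
    proof -
      have "dist (svc_f y/(y-x)) D < 1" using r that fx by (auto simp: dist_real_def)
      then have "\<bar>svc_f y / (y-x)\<bar> \<le> C" unfolding C_def dist_real_def by linarith
      then have "\<bar>svc_f y\<bar> / \<bar>y-x\<bar> \<le> C" by (simp add: abs_divide)
      then show ?thesis using that(2) by (simp add: divide_le_eq)
    qed
    obtain n1 where n1: "1/r < 2^n1" using real_arch_pow[of 2 "1/r"] by auto
    obtain n2 where n2: "16 * C^4 < 4^n2" using real_arch_pow[of 4 "16 * C^4"] by auto
    define n where "n = max n1 n2"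
    have "(2::real)^n1 \<le> 2^n" unfolding n_def by (rule power_increasing) auto
    then have "1/r < 2^n" using n1 by linarith
    then have rn: "1/2^n < r" using r(1) by (simp add: field_simps)
    have "(4::real)^n2 \<le> 4^n" unfolding n_def by (rule power_increasing) auto
    then have Cn: "16 * C^4 < 4^n" using n2 by linarith
    obtain y where y: "y \<in> {0..1}" "y \<noteq> x" "\<bar>y - x\<bar> \<le> 1/2^n" "\<bar>svc_f y\<bar>^4 \<ge> 1/(16*4^n)"
      using gap[OF x, of n] by blast
    have "\<bar>svc_f y\<bar> \<le> C * \<bar>y - x\<bar>" using bound y rn by force
    also have "\<dots> \<le> C * (1/2^n)" using y(3) unfolding C_def by (intro mult_left_mono) auto
    finally have "\<bar>svc_f y\<bar>^4 \<le> (C * (1/2^n))^4" by (intro power_mono) auto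
    also have "(C * (1/2^n))^4 = C^4 / (4^n * 4^n)"
    proof -
      have "((2::real)^n)^4 = (2^4)^n" by (metis power_mult mult.commute)
      also have "\<dots> = 4^n * 4^n" by (simp add: power_mult_distrib[symmetric])
      finally have "((2::real)^n)^4 = 4^n * 4^n" .
      then show ?thesis by (simp add: power_divide power_mult_distrib)
    qed
    finally have "4^n \<le> 16 * C^4" using final_arith[of "4^n" "\<bar>svc_f y\<bar>^4" C] y(4) by simp
    then show False using Cn by linarith
  qed
qed

end
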